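(* Let $1\le p<2$, $f\in\mathcal H_0$, $u$ the solution of $\partial_tu+\partial J(u)\ni0$, $u(0)=f$, with extinction time $T_{\mathrm{ex}}$, $\lambda:=1/((2-p)T_{\mathrm{ex}})$, $a(t)=(1-(2-p)\lambda t)^{\frac1{2-p}}$ and $w(t):=u(t)/a(t)$ for $0\le t<T_{\mathrm{ex}}$. Then $$(2-p)\lambda_1T_{\mathrm{ex}}\le\|w(t)\|^{2-p}\le(2-p)T_{\mathrm{ex}}\Lambda(t),\qquad t\ge0,$$ and in particular $t\mapsto w(t)$ is bounded.
   Context: $\mathcal H$ is a real Hilbert space with inner product $\langle\cdot,\cdot\rangle$ and norm $\|\cdot\|$. $J:\mathcal H\to\mathbb R\cup\{\infty\}$ is convex, lower semicontinuous, proper, with dense effective domain, and absolutely $p$-homogeneous: $J(cu)=|c|^pJ(u)$ for $c\ne0$, $J(0)=0$. Standing coercivity assumption: $\lambda_1:=\inf_{u\in\mathcal H_0}pJ(u)/\|u\|^p>0$. $\partial J(u)=\{\zeta: J(u)+\langle\zeta,v-u\rangle\le J(v)\ \forall v\}$; $\mathcal N(J)=\{u:J(u)=0\}$; $\mathcal H_0:=\mathcal N(J)^\perp\setminus\{0\}$. The gradient flow solution (Brezis) is the unique continuous $u:[0,\infty)\to\mathcal H$, Lipschitz on $[\delta,\infty)$ for all $\delta>0$, right-differentiable on $(0,\infty)$ with $u(0)=f$ and $\partial_t^+u(t)=-\zeta(t)$, $\zeta(t)$ the minimal-norm element of $\partial J(u(t))$. $T_{\mathrm{ex}}:=\inf\{T>0:u(t)=0\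 \forall t\ge T\}$ (finite for $p<2$). $\Lambda(t):=pJ(u(t))/\|u(t)\|^p$ for $0\le t<T_{\mathrm{ex}}$ (possibly $+\infty$ at $t=0$). *)

theory Defs
  imports "HOL-Analysis.Analysis" "HOL-Library.Extended_Real"
begin

text \<open>Real Hilbert space: type class real_inner together with complete_space.
  Functionals J take values in the extended reals (ereal); the value -\<infinity> is
  excluded by properness.\<close>

definition convex_fun :: "('a::real_vector \<Rightarrow> ereal) \<Rightarrow> bool" where
  "convex_fun J \<longleftrightarrow> (\<forall>x y \<theta>. 0 < \<theta> \<and> \<theta> < 1 \<longrightarrow>
      J ((1 - \<theta>) *\<^sub>R x + \<theta> *\<^sub>R y) \<le> ereal (1 - \<theta>) * J x + ereal \<theta> * J y)"

definition lsc_fun :: "('a::topological_space \<Rightarrow> ereal) \<Rightarrow> bool" where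
  "lsc_fun J \<longleftrightarrow> (\<forall>c::real. closed {x. J x \<le> ereal c})"

definition proper_fun :: "('a \<Rightarrow> ereal) \<Rightarrow> bool" where
  "proper_fun J \<longleftrightarrow> (\<forall>x. J x \<noteq> -\<infinity>) \<and> (\<exists>x. J x \<noteq> \<infinity>)"

definition dense_domain :: "('a::topological_space \<Rightarrow> ereal) \<Rightarrow> bool" where
  "dense_domain J \<longleftrightarrow> closure {x. J x < \<infinity>} = UNIV"

definition abs_homogeneous :: "real \<Rightarrow> ('a::real_vector \<Rightarrow> ereal) \<Rightarrow> bool" where
  "abs_homogeneous p J \<longleftrightarrow> J 0 = 0 \<and>
     (\<forall>c u. c \<noteq> 0 \<longrightarrow> J (c *\<^sub>R u) = ereal (\<bar>c\<bar> powr p) * J u)"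

definition null_set :: "('a \<Rightarrow> ereal) \<Rightarrow> 'a set" where
  "null_set J = {u. J u = 0}"

definition H0 :: "('a::real_inner \<Rightarrow> ereal) \<Rightarrow> 'a set" where
  "H0 J = {u. \<forall>v \<in> null_set J. inner u v = 0} - {0}"

definition lambda1 :: "real \<Rightarrow> ('a::real_inner \<Rightarrow> ereal) \<Rightarrow> ereal" where
  "lambda1 p J = (INF u \<in> H0 J. ereal p * J u / ereal (norm u powr p))"

definition subdiff :: "('a::real_inner \<Rightarrow> ereal) \<Rightarrow> 'a \<Rightarrow> 'a set" where
  "subdiff J u = {\<zeta>. \<forall>v. J u + ereal (inner \<zeta> (v - u)) \<le> J v}"

definition min_norm_subgrad :: "('a::real_inner \<Rightarrow> ereal) \<Rightarrow> 'a \<Rightarrow> 'a \<Rightarrow> bool" where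
  "min_norm_subgrad J u \<zeta> \<longleftrightarrow> \<zeta> \<in> subdiff J u \<and> (\<forall>\<eta> \<in> subdiff J u. norm \<zeta> \<le> norm \<eta>)"

definition gradient_flow :: "('a::real_inner \<Rightarrow> ereal) \<Rightarrow> 'a \<Rightarrow> (real \<Rightarrow> 'a) \<Rightarrow> bool" where
  "gradient_flow J f u \<longleftrightarrow>
     continuous_on {0..} u \<and>
     (\<forall>\<delta>>0. \<exists>L. L-lipschitz_on {\<delta>..} u) \<and>
     u 0 = f \<and>
     (\<forall>t>0. \<exists>\<zeta>. min_norm_subgrad J (u t) \<zeta> \<and>
                (u has_vector_derivative - \<zeta>) (at t within {t..}))"

definition extinction_time :: "(real \<Rightarrow> 'a::zero) \<Rightarrow> real" where
  "extinction_time u = Inf {T. T > 0 \<and> (\<forall>t\<ge>T. u t = 0)}"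

definition Rayleigh :: "real \<Rightarrow> ('a::real_normed_vector \<Rightarrow> ereal) \<Rightarrow> (real \<Rightarrow> 'a) \<Rightarrow> real \<Rightarrow> ereal" where
  "Rayleigh p J u t = ereal p * J (u t) / ereal (norm (u t) powr p)"

end

theory Submission
  imports Defs
begin

lemma dini_core:
  fixes f :: "real \<Rightarrow> real"
  assumes cb: "c \<le> b" and cont: "continuous_on {c..b} f"
    and der: "\<And>x. c \<le> x \<Longrightarrow> x < b \<Longrightarrow> (f has_real_derivative f' x) (at_right x)"
    and neg: "\<And>x. c \<le> x \<Longrightarrow> x < b \<Longrightarrow> f' x \<le> 0"
    and e: "e > 0"
  shows "f b \<le> f c + e * (b - c)"
proof -
  define S where "S = {x \<in> {c..b}. \<forall>y\<in>{c..x}. f y \<le> f c + e * (y - c)}"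
  have cS: "c \<in> S" using cb by (auto simp: S_def)
  have bdd: "bdd_above S" unfolding S_def by (rule bdd_aboveI[of _ b]) auto
  define s where "s = Sup S"
  have cs: "c \<le> s" unfolding s_def using cS bdd by (meson cSup_upper)
  have sb: "s \<le> b" unfolding s_def using cS by (intro cSup_least) (auto simp: S_def)
  have below: "f y \<le> f c + e * (y - c)" if y1: "c \<le> y" and y2: "y < s" for y
  proof -
    obtain x where "x \<in> S" "y < x" using less_cSupD[of S y] cS y2 unfolding s_def by blast
    then show ?thesis using y1 by (auto simp: S_def)
  qed
  have fs: "f s \<le> f c + e * (s - c)"
  proof (cases "c = s")
    case True then show ?thesis by simp
  next
    case False
    with cs have cs': "c < s" by simp
    have lim: "(f \<longlongrightarrow> f s) (at_left s)"
    proof -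
      have "(f \<longlongrightarrow> f s) (at s within {c..b})"
        using cont cs sb by (simp add: continuous_on_def)
      moreover have "at_left s \<le> at s within {c..b}"
      proof -
        have "at s within {c..s} \<le> at s within {c..b}" by (rule at_le) (use sb in auto)
        moreover have "at s within {c..s} = at_left s" using cs' by (rule at_within_Icc_at_left)
        ultimately show ?thesis by simp
      qed
      ultimately show ?thesis by (rule tendsto_mono[rotated])
    qed
    have "((\<lambda>y. f c + e * (y - c)) \<longlongrightarrow> f c + e * (s - c)) (at_left s)"
      by (intro tendsto_intros)
    moreover have "eventually (\<lambda>y. f y \<le> f c + e * (y - c)) (at_left s)"
      using eventually_at_left_real[OF cs'] by eventually_elim (auto intro: below)
    ultimately show ?thesis using lim by (intro tendsto_le[OF trivial_limit_at_left_real]) auto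
  qed
  have sS: "s \<in> S"
    unfolding S_def
  proof (intro CollectI conjI ballI)
    show "s \<in> {c..b}" using cs sb by auto
    fix y assume y: "y \<in> {c..s}"
    show "f y \<le> f c + e * (y - c)"
    proof (cases "y = s")
      case True then show ?thesis using fs by simp
    next
      case False with y have "c \<le> y" "y < s" by auto
      then show ?thesis by (rule below)
    qed
  qed
  show ?thesis
  proof (cases "s = b")
    case True then show ?thesis using fs by simp
  next
    case False
    with sb have sb': "s < b" by simp
    have "((\<lambda>y. (f y - f s) / (y - s)) \<longlongrightarrow> f' s) (at_right s)"
      using der[OF cs sb'] by (simp add: has_field_derivative_iff)
    moreover have "f' s < e" using neg[OF cs sb'] e by simp
    ultimately have "eventually (\<lambda>y. (f y - f s) / (y - s) < e) (at_right s)"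
      by (rule order_tendstoD)
    then obtain b' where d: "b' > s" and hd: "\<And>y. s < y \<Longrightarrow> y < b' \<Longrightarrow> (f y - f s) / (y - s) < e"
      unfolding eventually_at_right_field by blast
    define x where "x = min b ((s + b') / 2)"
    have sx: "s < x" "x \<le> b" using sb' d unfolding x_def by auto
    have "x \<in> S"
      unfolding S_def
    proof (intro CollectI conjI ballI)
      show "x \<in> {c..b}" using sx cs by auto
      fix y assume y: "y \<in> {c..x}"
      show "f y \<le> f c + e * (y - c)"
      proof (cases "y \<le> s")
        case True then show ?thesis using sS y by (auto simp: S_def)
      next
        case False
        then have "s < y" "y < b'" using y d unfolding x_def by auto
        from hd[OF this] have "f y - f s < e * (y - s)" using \<open>s < y\<close> by (simp add: divide_less_eq)
        then show ?thesis using fs by (simp add: algebra_simps)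
      qed
    qed
    then have "x \<le> s" unfolding s_def using bdd by (rule cSup_upper)
    then show ?thesis using sx by simp
  qed
qed

lemma dini:
  fixes f :: "real \<Rightarrow> real"
  assumes ab: "a \<le> b" and cont: "continuous_on {a..b} f"
    and der: "\<And>x. a < x \<Longrightarrow> x < b \<Longrightarrow> (f has_real_derivative f' x) (at_right x)"
    and neg: "\<And>x. a < x \<Longrightarrow> x < b \<Longrightarrow> f' x \<le> 0"
  shows "f b \<le> f a"
proof (cases "a = b")
  case True then show ?thesis by simp
next
  case False
  with ab have ab': "a < b" by simp
  have main: "f b \<le> f a + e * (b - a)" if e: "e > 0" for e
  proof -
    have hc: "f b \<le> f c + e * (b - c)" if c: "a < c" "c < b" for c
    proof (rule dini_core[where f' = f'])
      show "c \<le> b" using c by simp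
      show "continuous_on {c..b} f" using cont by (rule continuous_on_subset) (use c in auto)
      show "(f has_real_derivative f' x) (at_right x)" if "c \<le> x" "x < b" for x
        using der that c by simp
      show "f' x \<le> 0" if "c \<le> x" "x < b" for x using neg that c by simp
    qed (use e in simp)
    have ev: "eventually (\<lambda>c. f b \<le> f c + e * (b - c)) (at_right a)"
      using eventually_at_right_real[OF ab'] by eventually_elim (auto intro: hc)
    have "(f \<longlongrightarrow> f a) (at_right a)"
      using cont ab' by (simp add: continuous_on_def at_within_Icc_at_right[symmetric])
    then have "((\<lambda>c. f c + e * (b - c)) \<longlongrightarrow> f a + e * (b - a)) (at_right a)"
      by (intro tendsto_intros)
    from tendsto_le[OF trivial_limit_at_right_real this tendsto_const ev] show ?thesis .
  qed
  show ?thesis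
  proof (rule field_le_epsilon)
    fix e :: real assume "e > 0"
    then have "e / (b - a) > 0" using ab' by simp
    from main[OF this] show "f b \<le> f a + e" using ab' by simp
  qed
qed

lemma dini_inc:
  fixes f :: "real \<Rightarrow> real"
  assumes ab: "a \<le> b" and cont: "continuous_on {a..b} f"
    and der: "\<And>x. a < x \<Longrightarrow> x < b \<Longrightarrow> (f has_real_derivative f' x) (at_right x)"
    and pos: "\<And>x. a < x \<Longrightarrow> x < b \<Longrightarrow> f' x \<ge> 0"
  shows "f a \<le> f b"
proof -
  have "(\<lambda>x. - f x) b \<le> (\<lambda>x. - f x) a"
  proof (rule dini[where f = "\<lambda>x. - f x" and f' = "\<lambda>x. - f' x"])
    show "continuous_on {a..b} (\<lambda>x. - f x)" using cont by (intro continuous_intros)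
    show "((\<lambda>x. - f x) has_real_derivative - f' x) (at_right x)" if "a < x" "x < b" for x
      using DERIV_minus[OF der[OF that]] by simp
  qed (use ab pos in auto)
  then show ?thesis by simp
qed


locale hc =
  fixes J :: "'a::{real_inner,complete_space} \<Rightarrow> ereal" and p :: real
  assumes conv: "convex_fun J" and prp: "proper_fun J" and hom: "abs_homogeneous p J"
    and p1: "1 \<le> p"
begin

definition jr where "jr x = real_of_ereal (J x)"

lemma J_ninf: "J x \<noteq> -\<infinity>" using prp by (auto simp: proper_fun_def)

lemma J0: "J 0 = 0" using hom by (simp add: abs_homogeneous_def)

lemma J_scale: "c \<noteq> 0 \<Longrightarrow> J (c *\<^sub>R x) = ereal (\<bar>c\<bar> powr p) * J x"
  using hom by (simp add: abs_homogeneous_def)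

lemma J_convex: "0 < t \<Longrightarrow> t < 1 \<Longrightarrow> J ((1 - t) *\<^sub>R x + t *\<^sub>R y) \<le> ereal (1 - t) * J x + ereal t * J y"
  using conv by (simp add: convex_fun_def)

lemma J_nonneg: "J x \<ge> 0"
proof -
  have "J ((1 - 1/2) *\<^sub>R x + (1/2) *\<^sub>R (- x)) \<le> ereal (1 - 1/2) * J x + ereal (1/2) * J (- x)"
    by (rule J_convex) auto
  moreover have "J (- x) = J x" using J_scale[of "-1" x] by simp
  ultimately have "0 \<le> ereal (1/2) * J x + ereal (1/2) * J x" by (simp add: J0)
  moreover have "ereal (1/2) * J x + ereal (1/2) * J x = J x"
    using J_ninf[of x] by (cases "J x") (auto simp: ereal_plus_eq_PInfty)
  ultimately show ?thesis by simp
qed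

lemma J_fin: "J x \<noteq> \<infinity> \<Longrightarrow> J x = ereal (jr x)"
  using J_ninf[of x] by (cases "J x") (auto simp: jr_def)

lemma jr_nonneg: "jr x \<ge> 0"
  using J_nonneg[of x] by (cases "J x") (auto simp: jr_def)

lemma subdiff_fin:
  assumes "z \<in> subdiff J x" shows "J x = ereal (jr x)"
proof -
  obtain y where y: "J y \<noteq> \<infinity>" using prp by (auto simp: proper_fun_def)
  have "J x + ereal (inner z (y - x)) \<le> J y" using assms by (auto simp: subdiff_def)
  then have "J x \<noteq> \<infinity>" using y by auto
  then show ?thesis by (rule J_fin)
qed

lemma subdiff_real:
  assumes "z \<in> subdiff J x" "J v = ereal r"
  shows "jr x + inner z (v - x) \<le> r"
proof -
  have "J x + ereal (inner z (v - x)) \<le> J v" using assms(1) by (auto simp: subdiff_def)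
  then show ?thesis using subdiff_fin[OF assms(1)] assms(2) by simp
qed

lemma subdiff_real':
  assumes "z \<in> subdiff J x" "J v \<noteq> \<infinity>"
  shows "jr x + inner z (v - x) \<le> jr v"
  using subdiff_real[OF assms(1) J_fin[OF assms(2)]] .

lemma J_scale_fin:
  assumes "J x \<noteq> \<infinity>" "c \<noteq> 0"
  shows "J (c *\<^sub>R x) = ereal (\<bar>c\<bar> powr p * jr x)"
  using J_scale[OF assms(2), of x] J_fin[OF assms(1)] by simp

lemma subdiff_mono:
  assumes "z1 \<in> subdiff J x1" "z2 \<in> subdiff J x2"
  shows "inner (z1 - z2) (x1 - x2) \<ge> 0"
proof -
  have a: "J x2 \<noteq> \<infinity>" using subdiff_fin[OF assms(2)] by simp
  have b: "J x1 \<noteq> \<infinity>" using subdiff_fin[OF assms(1)] by simp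
  have "jr x1 + inner z1 (x2 - x1) \<le> jr x2" by (rule subdiff_real'[OF assms(1) a])
  moreover have "jr x2 + inner z2 (x1 - x2) \<le> jr x1" by (rule subdiff_real'[OF assms(2) b])
  ultimately show ?thesis by (simp add: inner_diff_left inner_diff_right inner_commute algebra_simps)
qed

lemma euler:
  assumes z: "z \<in> subdiff J x"
  shows "inner z x = p * jr x"
proof -
  have fx: "J x \<noteq> \<infinity>" using subdiff_fin[OF z] by simp
  define q where "q c = (c powr p - 1) / (c - 1)" for c :: real
  have ineq: "(c - 1) * inner z x \<le> (c powr p - 1) * jr x" if c: "c > 0" for c
  proof -
    have "jr x + inner z (c *\<^sub>R x - x) \<le> \<bar>c\<bar> powr p * jr x"
      by (rule subdiff_real[OF z J_scale_fin[OF fx]]) (use c in simp)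
    moreover have "inner z (c *\<^sub>R x - x) = (c - 1) * inner z x"
      by (simp add: inner_diff_right algebra_simps)
    ultimately show ?thesis using c by (simp add: algebra_simps)
  qed
  have "((\<lambda>c. c powr p) has_real_derivative p * 1 powr (p - 1)) (at 1)"
    by (rule has_real_derivative_powr) simp
  then have qlim: "(q \<longlongrightarrow> p) (at 1)"
    by (simp add: has_field_derivative_iff q_def[abs_def])
  have "inner z x \<le> q c * jr x" if "1 < c" for c
    using ineq[of c] that by (simp add: q_def field_simps)
  then have "eventually (\<lambda>c. inner z x \<le> q c * jr x) (at_right 1)"
    by (simp add: eventually_at_right_less eventually_mono[OF eventually_at_right_less])
  moreover have "((\<lambda>c. q c * jr x) \<longlongrightarrow> p * jr x) (at_right 1)"
    using qlim by (intro tendsto_intros) (simp add: filterlim_at_split)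
  ultimately have le: "inner z x \<le> p * jr x"
    by (intro tendsto_le[OF trivial_limit_at_right_real]) auto
  have hl: "inner z x \<ge> q c * jr x" if "0 < c" "c < 1" for c
    using ineq[of c] that by (simp add: q_def field_simps)
  have "eventually (\<lambda>c. inner z x \<ge> q c * jr x) (at_left 1)"
    using eventually_at_left_real[of 0 "1::real"] by (rule eventually_mono) (auto intro: hl)
  moreover have "((\<lambda>c. q c * jr x) \<longlongrightarrow> p * jr x) (at_left 1)"
    using qlim by (intro tendsto_intros) (simp add: filterlim_at_split)
  ultimately have ge: "inner z x \<ge> p * jr x"
    by (intro tendsto_le[OF trivial_limit_at_left_real]) auto
  from le ge show ?thesis by simp
qed

lemma null_orth_aux:
  assumes z: "z \<in> subdiff J x" and n: "J n = 0"
  shows "s * inner z n \<le> 0"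
proof -
  have fx: "J x \<noteq> \<infinity>" using subdiff_fin[OF z] by simp
  define B where "B t = (1 - t) * ((1 / (1 - t)) powr p * jr x)" for t :: real
  have bnd: "s * inner z n \<le> B t - jr x" if t: "0 < t" "t < 1" for t
  proof -
    define a where "a = (1 / (1 - t)) *\<^sub>R x"
    define b where "b = (s / t) *\<^sub>R n"
    have ab: "(1 - t) *\<^sub>R a + t *\<^sub>R b = x + s *\<^sub>R n" using t by (simp add: a_def b_def)
    have Ja: "J a = ereal ((1 / (1 - t)) powr p * jr x)"
      unfolding a_def using J_scale_fin[OF fx, of "1 / (1 - t)"] t by simp
    have Jb: "J b = 0"
    proof (cases "s = 0")
      case True then show ?thesis by (simp add: b_def J0)
    next
      case False then show ?thesis using J_scale[of "s / t" n] t n by (simp add: b_def)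
    qed
    have "J (x + s *\<^sub>R n) \<le> ereal (1 - t) * J a + ereal t * J b"
      using J_convex[OF t, of a b] ab by simp
    also have "\<dots> = ereal (B t)" by (simp add: Ja Jb B_def)
    finally have le: "J (x + s *\<^sub>R n) \<le> ereal (B t)" .
    then have fin: "J (x + s *\<^sub>R n) \<noteq> \<infinity>" by auto
    have "jr x + inner z (x + s *\<^sub>R n - x) \<le> jr (x + s *\<^sub>R n)" by (rule subdiff_real'[OF z fin])
    moreover have "jr (x + s *\<^sub>R n) \<le> B t" using le J_fin[OF fin] by simp
    ultimately show ?thesis by simp
  qed
  have ev: "eventually (\<lambda>t. s * inner z n \<le> B t - jr x) (at_right 0)"
    using eventually_at_right_real[of 0 "1::real"] by (rule eventually_mono) (auto intro: bnd)
  have "((\<lambda>t. B t - jr x) \<longlongrightarrow> (1 - 0) * ((1 / (1 - 0)) powr p * jr x) - jr x) (at_right 0)"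
    unfolding B_def by (intro tendsto_intros) auto
  then have "((\<lambda>t. B t - jr x) \<longlongrightarrow> 0) (at_right 0)" by simp
  from tendsto_le[OF trivial_limit_at_right_real this tendsto_const ev] show ?thesis .
qed

lemma null_orth:
  assumes z: "z \<in> subdiff J x" and n: "J n = 0"
  shows "inner z n = 0"
  using null_orth_aux[OF z n, of 1] null_orth_aux[OF z n, of "-1"] by simp

lemma subdiff_convex:
  assumes "z1 \<in> subdiff J x" "z2 \<in> subdiff J x" "0 \<le> t" "t \<le> 1"
  shows "(1 - t) *\<^sub>R z1 + t *\<^sub>R z2 \<in> subdiff J x"
  unfolding subdiff_def
proof (intro CollectI allI)
  fix v
  show "J x + ereal (inner ((1 - t) *\<^sub>R z1 + t *\<^sub>R z2) (v - x)) \<le> J v"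
  proof (cases "J v = \<infinity>")
    case True then show ?thesis by simp
  next
    case False
    have "jr x + inner z1 (v - x) \<le> jr v" by (rule subdiff_real'[OF assms(1) False])
    moreover have "jr x + inner z2 (v - x) \<le> jr v" by (rule subdiff_real'[OF assms(2) False])
    ultimately have "(1 - t) * (jr x + inner z1 (v - x)) + t * (jr x + inner z2 (v - x)) \<le> (1 - t) * jr v + t * jr v"
      using assms(3,4) by (intro add_mono mult_left_mono) auto
    then have "jr x + inner ((1 - t) *\<^sub>R z1 + t *\<^sub>R z2) (v - x) \<le> jr v"
      by (simp add: inner_add_left algebra_simps)
    then show ?thesis using subdiff_fin[OF assms(1)] J_fin[OF False] by simp
  qed
qed

lemma min_norm_unique:
  assumes "min_norm_subgrad J x z1" "min_norm_subgrad J x z2"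
  shows "z1 = z2"
proof -
  have m: "(1 - 1/2) *\<^sub>R z1 + (1/2) *\<^sub>R z2 \<in> subdiff J x"
    using assms by (intro subdiff_convex) (auto simp: min_norm_subgrad_def)
  have n12: "norm z1 = norm z2" using assms by (auto simp: min_norm_subgrad_def intro: antisym)
  have "norm z1 \<le> norm ((1 - 1/2) *\<^sub>R z1 + (1/2) *\<^sub>R z2)" using assms(1) m by (auto simp: min_norm_subgrad_def)
  then have "norm z1 ^ 2 \<le> norm ((1/2) *\<^sub>R (z1 + z2)) ^ 2" by (simp add: scaleR_add_right power_mono)
  then have "4 * norm z1 ^ 2 \<le> norm (z1 + z2) ^ 2" by (simp add: power2_eq_square)
  moreover have "norm (z1 + z2) ^ 2 + norm (z1 - z2) ^ 2 = 2 * norm z1 ^ 2 + 2 * norm z2 ^ 2"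
    by (simp add: power2_norm_eq_inner inner_add_left inner_add_right inner_diff_left inner_diff_right inner_commute)
  moreover have "norm z1 ^ 2 = norm z2 ^ 2" using n12 by simp
  ultimately have "norm (z1 - z2) ^ 2 \<le> 0" by linarith
  then show ?thesis by simp
qed

end

lemma parallelogram:
  fixes a b :: "'a::real_inner"
  shows "norm (a + b) ^ 2 + norm (a - b) ^ 2 = 2 * norm a ^ 2 + 2 * norm b ^ 2"
  by (simp add: power2_norm_eq_inner inner_add_left inner_add_right inner_diff_left inner_diff_right inner_commute)

lemma nested_convex_min:
  fixes S :: "nat \<Rightarrow> 'a::{real_inner,complete_space} set"
  assumes conv: "\<And>n. convex (S n)"
    and dec: "\<And>n k. n \<le> k \<Longrightarrow> S k \<subseteq> S n"
    and cl: "\<And>n. closed (S n)"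
    and q: "\<And>n. q n \<in> S n" and qb: "\<And>n. norm (q n) ^ 2 \<le> R"
  shows "\<exists>y. (\<forall>n. y \<in> S n) \<and> norm y ^ 2 \<le> R"
proof -
  define d where "d n = Inf ((\<lambda>y. norm y ^ 2) ` S n)" for n
  have ne: "(\<lambda>y. norm y ^ 2) ` S n \<noteq> {}" for n using q[of n] by auto
  have bb: "bdd_below ((\<lambda>y. norm y ^ 2) ` S n)" for n by (rule bdd_belowI[of _ 0]) auto
  have dle: "d n \<le> norm y ^ 2" if "y \<in> S n" for n y
    unfolding d_def using bb that by (intro cInf_lower) auto
  have dR: "d n \<le> R" for n using dle[OF q[of n]] qb[of n] by simp
  have inc: "incseq d"
  proof (rule incseq_SucI)
    fix n show "d n \<le> d (Suc n)"
      unfolding d_def[of "Suc n"] using ne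
      using dec[of n "Suc n"] by (intro cInf_greatest) (auto intro!: dle)
  qed
  have bda: "bdd_above (range d)" by (rule bdd_aboveI[of _ R]) (auto intro: dR)
  define L where "L = (SUP n. d n)"
  have dL: "d \<longlonglongrightarrow> L" unfolding L_def by (rule LIMSEQ_incseq_SUP[OF bda inc])
  have dleL: "d n \<le> L" for n unfolding L_def using bda by (intro cSUP_upper) simp_all
  have "\<exists>y\<in>S n. norm y ^ 2 < d n + 1 / (Suc n)" for n
  proof -
    have "d n < d n + 1 / Suc n" by simp
    then have "Inf ((\<lambda>y. norm y ^ 2) ` S n) < d n + 1 / Suc n" by (simp add: d_def)
    then show ?thesis using cInf_less_iff[OF ne[of n] bb[of n], of "d n + 1 / real (Suc n)"] by blast
  qed
  then obtain pp where pS: "\<And>n. pp n \<in> S n" and pn: "\<And>n. norm (pp n) ^ 2 < d n + 1 / Suc n"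
    by metis
  have pdist: "norm (pp n - pp k) ^ 2 \<le> 2 * (L - d n) + 4 / Suc n" if nk: "n \<le> k" for n k
  proof -
    have "pp k \<in> S n" using dec[OF nk] pS[of k] by auto
    then have "(1/2) *\<^sub>R pp n + (1/2) *\<^sub>R pp k \<in> S n"
      using conv[of n] pS[of n] unfolding convex_def by auto
    then have "d n \<le> norm ((1/2) *\<^sub>R pp n + (1/2) *\<^sub>R pp k) ^ 2" by (rule dle)
    also have "\<dots> = norm (pp n + pp k) ^ 2 / 4"
      by (simp add: scaleR_add_right[symmetric] power_divide power2_eq_square)
    finally have m: "4 * d n \<le> norm (pp n + pp k) ^ 2" by simp
    have "1 / real (Suc k) \<le> 1 / Suc n" using nk by (intro divide_left_mono) auto
    moreover have "4 / real (Suc n) = 4 * (1 / real (Suc n))" by simp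
    ultimately show ?thesis using parallelogram[of "pp n" "pp k"] m pn[of n] pn[of k] dleL[of k]
      by (smt (verit))
  qed
  have "Cauchy pp"
  proof (rule CauchyI)
    fix e :: real assume e: "e > 0"
    then have e2: "e^2 / 8 > 0" by simp
    from dL[THEN order_tendstoD(1), of "L - e^2/8"] e2
    obtain M1 where M1: "\<And>n. n \<ge> M1 \<Longrightarrow> d n > L - e^2/8"
      by (auto simp: eventually_sequentially)
    obtain M2 :: nat where M2: "M2 > 16 / e^2" using reals_Archimedean2 by blast
    define M where "M = max M1 M2"
    show "\<exists>M. \<forall>m\<ge>M. \<forall>n\<ge>M. norm (pp m - pp n) < e"
    proof (intro exI allI impI)
      fix m n assume mn: "m \<ge> M" "n \<ge> M"
      have key: "norm (pp a - pp b) ^ 2 < e ^ 2" if ab: "a \<le> b" "a \<ge> M" for a b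
      proof -
        define E where "E = e^2 / 8"
        have E0: "E > 0" using e by (simp add: E_def)
        have eE: "e^2 = 8 * E" by (simp add: E_def)
        have h1: "L - d a < E" using M1[of a] ab by (auto simp: M_def E_def)
        have h2: "4 / real (Suc a) < 2 * E"
        proof -
          have "real (Suc a) > 16 / e^2" using M2 ab by (auto simp: M_def)
          then have "16 < real (Suc a) * e^2" using e by (simp add: field_simps)
          then show ?thesis using e by (simp add: field_simps E_def)
        qed
        have h3: "norm (pp a - pp b) ^ 2 \<le> 2 * (L - d a) + 4 / real (Suc a)" by (rule pdist[OF ab(1)])
        have h3': "norm (pp a - pp b) ^ 2 \<le> 2 * L - 2 * d a + 4 / real (Suc a)" using h3 by (simp add: algebra_simps)
        have "norm (pp a - pp b) ^ 2 < 8 * E" using h1 h2 h3' E0 by linarith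
        then show ?thesis by (simp add: eE)
      qed
      have "norm (pp m - pp n) ^ 2 < e ^ 2"
      proof (cases "m \<le> n")
        case True then show ?thesis using key[of m n] mn by simp
      next
        case False
        then have "norm (pp n - pp m) ^ 2 < e ^ 2" using key[of n m] mn by simp
        then show ?thesis by (simp add: norm_minus_commute)
      qed
      then show "norm (pp m - pp n) < e" using e by (simp add: power_less_imp_less_base)
    qed
  qed
  then obtain y where y: "pp \<longlonglongrightarrow> y" using Cauchy_convergent_iff convergent_def by blast
  have yS: "y \<in> S n" for n
  proof -
    have h1: "(\<lambda>k. pp (k + n)) \<longlonglongrightarrow> y" using y by (rule LIMSEQ_ignore_initial_segment)
    have h2: "pp (k + n) \<in> S n" for k using dec[of n "k + n"] pS[of "k + n"] by auto
    show ?thesis by (rule closed_sequentially[OF cl[of n] h2 h1])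
  qed
  have "(\<lambda>n. norm (pp n) ^ 2) \<longlonglongrightarrow> norm y ^ 2" using y by (intro tendsto_intros)
  moreover have "(\<lambda>n. R + 1 / Suc n) \<longlonglongrightarrow> R + 0"
    using LIMSEQ_inverse_real_of_nat by (intro tendsto_intros) (simp add: divide_inverse)
  moreover have "\<forall>n. norm (pp n) ^ 2 \<le> R + 1 / Suc n"
  proof
    fix n show "norm (pp n) ^ 2 \<le> R + 1 / Suc n" using pn[of n] dR[of n] by linarith
  qed
  ultimately have "norm y ^ 2 \<le> R + 0" by (intro LIMSEQ_le) auto
  then show ?thesis using yS by auto
qed


context hc begin

definition Sd :: "'a \<Rightarrow> real \<Rightarrow> 'a set" where
  "Sd x d = (\<Inter>v\<in>{v. J v \<noteq> \<infinity>}. {m. inner (v - x) m \<le> jr v - jr x + d})"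

lemma Sd_iff: "m \<in> Sd x d \<longleftrightarrow> (\<forall>v. J v \<noteq> \<infinity> \<longrightarrow> inner m (v - x) \<le> jr v - jr x + d)"
  by (auto simp: Sd_def inner_commute)

lemma Sd_convex: "convex (Sd x d)"
  unfolding Sd_def by (intro convex_INT convex_halfspace_le)

lemma Sd_closed: "closed (Sd x d)"
  unfolding Sd_def by (intro closed_INT ballI closed_halfspace_le)

lemma Sd_mono: "d1 \<le> d2 \<Longrightarrow> Sd x d1 \<subseteq> Sd x d2"
  by (auto simp: Sd_iff) (smt (verit))

lemma subdiff_Sd: "z \<in> subdiff J x \<Longrightarrow> 0 \<le> d \<Longrightarrow> z \<in> Sd x d"
  using subdiff_real' by (fastforce simp: Sd_iff)

lemma Sd_subdiff:
  assumes fx: "J x = ereal (jr x)" and m: "\<And>n. m \<in> Sd x (1 / Suc n)"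
  shows "m \<in> subdiff J x"
  unfolding subdiff_def
proof (intro CollectI allI)
  fix v
  show "J x + ereal (inner m (v - x)) \<le> J v"
  proof (cases "J v = \<infinity>")
    case True then show ?thesis by simp
  next
    case False
    have le: "inner m (v - x) \<le> jr v - jr x + 1 / Suc n" for n using m[of n] False by (auto simp: Sd_iff)
    have "inner m (v - x) \<le> jr v - jr x"
    proof (rule ccontr)
      assume "\<not> ?thesis"
      then have pos: "inner m (v - x) - (jr v - jr x) > 0" by simp
      obtain n :: nat where "inverse (real (Suc n)) < inner m (v - x) - (jr v - jr x)"
        using reals_Archimedean[OF pos] by blast
      then show False using le[of n] by (simp add: divide_inverse)
    qed
    then show ?thesis using fx J_fin[OF False] by simp
  qed
qed

lemma approx_key:
  assumes mn: "min_norm_subgrad J x z0" and e: "e > 0"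
  shows "\<exists>d>0. \<forall>m\<in>Sd x d. norm m \<le> norm z0 \<longrightarrow> norm (m - z0) \<le> e"
proof (rule ccontr)
  assume "\<not> ?thesis"
  then have "\<forall>n::nat. \<exists>m. m \<in> Sd x (1 / Suc n) \<and> norm m \<le> norm z0 \<and> norm (m - z0) > e"
    by (metis not_le of_nat_0_less_iff zero_less_Suc zero_less_divide_1_iff)
  then obtain mm where mmS: "\<And>n. mm n \<in> Sd x (1 / Suc n)" and mmn: "\<And>n. norm (mm n) \<le> norm z0"
    and mme: "\<And>n. norm (mm n - z0) > e" by metis
  have z0s: "z0 \<in> subdiff J x" using mn by (simp add: min_norm_subgrad_def)
  define qq where "qq n = (1/2) *\<^sub>R mm n + (1/2) *\<^sub>R z0" for n
  have qS: "qq n \<in> Sd x (1 / Suc n)" for n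
  proof -
    have "z0 \<in> Sd x (1 / Suc n)" by (rule subdiff_Sd[OF z0s]) simp
    then show ?thesis using Sd_convex[of x "1 / Suc n"] mmS[of n] unfolding convex_def qq_def by auto
  qed
  have qn: "norm (qq n) ^ 2 \<le> norm z0 ^ 2 - e^2 / 4" for n
  proof -
    have "norm (qq n) ^ 2 = norm (mm n + z0) ^ 2 / 4"
      by (simp add: qq_def scaleR_add_right[symmetric] power_divide power2_eq_square)
    moreover have "norm (mm n) ^ 2 \<le> norm z0 ^ 2" using mmn[of n] by (simp add: power_mono)
    moreover have "e ^ 2 < norm (mm n - z0) ^ 2" using mme[of n] e by (simp add: power_strict_mono)
    ultimately show ?thesis using parallelogram[of "mm n" z0] by linarith
  qed
  obtain y where yS: "\<And>n. y \<in> Sd x (1 / Suc n)" and yn: "norm y ^ 2 \<le> norm z0 ^ 2 - e^2 / 4"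
  proof -
    have "\<exists>y. (\<forall>n. y \<in> Sd x (1 / Suc n)) \<and> norm y ^ 2 \<le> norm z0 ^ 2 - e^2 / 4"
    proof (rule nested_convex_min[where q = qq])
      show "Sd x (1 / Suc k) \<subseteq> Sd x (1 / Suc n)" if "n \<le> k" for n k
        by (rule Sd_mono) (use that in \<open>simp add: frac_le\<close>)
    qed (use qS qn Sd_convex Sd_closed in auto)
    then show ?thesis using that by blast
  qed
  have "y \<in> subdiff J x" by (rule Sd_subdiff[OF subdiff_fin[OF z0s] yS])
  then have "norm z0 \<le> norm y" using mn by (auto simp: min_norm_subgrad_def)
  then have "norm z0 ^ 2 \<le> norm y ^ 2" by (simp add: power_mono)
  moreover have "e^2 / 4 > 0" using e by simp
  ultimately show False using yn by linarith
qed

lemma approx_conv: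
  assumes mn: "min_norm_subgrad J x z0"
    and ev: "\<And>d. d > 0 \<Longrightarrow> eventually (\<lambda>s. m s \<in> Sd x d) F"
    and bd: "eventually (\<lambda>s. norm (m s) \<le> norm z0) F"
  shows "(m \<longlongrightarrow> z0) F"
proof (rule tendstoI)
  fix e :: real assume e: "e > 0"
  obtain d where d: "d > 0" and hd: "\<And>m. m \<in> Sd x d \<Longrightarrow> norm m \<le> norm z0 \<Longrightarrow> norm (m - z0) \<le> e / 2"
    using approx_key[OF mn, of "e/2"] e by auto
  show "eventually (\<lambda>s. dist (m s) z0 < e) F"
    using ev[OF d] bd
  proof eventually_elim
    case (elim s)
    then have "norm (m s - z0) \<le> e / 2" by (intro hd)
    then show ?case using e by (simp add: dist_norm)
  qed
qed

end

lemma vd_quot: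
  fixes f :: "real \<Rightarrow> 'b::real_normed_vector"
  assumes "(f has_vector_derivative v) (at x within S)"
  shows "((\<lambda>y. (f y - f x) /\<^sub>R (y - x)) \<longlongrightarrow> v) (at x within S)"
proof -
  have "((\<lambda>y. norm ((f y - f x) - (\<lambda>h. h *\<^sub>R v) (y - x)) / norm (y - x)) \<longlongrightarrow> 0) (at x within S)"
    using assms unfolding has_vector_derivative_def has_derivative_iff_norm by blast
  then have "((\<lambda>y. norm ((f y - f x) /\<^sub>R (y - x) - v)) \<longlongrightarrow> 0) (at x within S)"
  proof (rule Lim_transform_eventually)
    show "eventually (\<lambda>y. norm ((f y - f x) - (\<lambda>h. h *\<^sub>R v) (y - x)) / norm (y - x) = norm ((f y - f x) /\<^sub>R (y - x) - v)) (at x within S)"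
      unfolding eventually_at_filter
    proof (intro always_eventually allI impI)
      fix y :: real assume "y \<noteq> x"
      then have "(f y - f x) /\<^sub>R (y - x) - v = (1 / (y - x)) *\<^sub>R ((f y - f x) - (y - x) *\<^sub>R v)"
        by (simp add: scaleR_diff_right divide_inverse)
      then show "norm ((f y - f x) - (\<lambda>h. h *\<^sub>R v) (y - x)) / norm (y - x) = norm ((f y - f x) /\<^sub>R (y - x) - v)"
        by (simp add: divide_inverse mult.commute)
    qed
  qed
  then have "((\<lambda>y. (f y - f x) /\<^sub>R (y - x) - v) \<longlongrightarrow> 0) (at x within S)"
    by (simp only: tendsto_norm_zero_iff)
  then show ?thesis by (simp add: LIM_zero_iff)
qed

lemma quot_shift:
  fixes u :: "real \<Rightarrow> 'b::real_normed_vector"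
  assumes "((\<lambda>y. (u y - u (x + h)) /\<^sub>R (y - (x + h))) \<longlongrightarrow> v) (at_right (x + h))"
  shows "((\<lambda>y. (u (y + h) - u (x + h)) /\<^sub>R (y - x)) \<longlongrightarrow> v) (at_right x)"
proof -
  have fm: "filtermap (\<lambda>y. y + h) (at_right x) = at_right (x + h)"
    using filtermap_at_right_shift[of "-h" x] by simp
  have "(((\<lambda>y. (u y - u (x + h)) /\<^sub>R (y - (x + h))) \<circ> (\<lambda>y. y + h)) \<longlongrightarrow> v) (at_right x)"
    unfolding tendsto_compose_filtermap fm by (rule assms)
  then show ?thesis by (simp add: o_def)
qed

lemma quot_real:
  fixes f :: "real \<Rightarrow> real"
  shows "(f has_real_derivative d) (at_right x) \<longleftrightarrow> ((\<lambda>y. (f y - f x) /\<^sub>R (y - x)) \<longlongrightarrow> d) (at_right x)"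
  by (simp add: has_field_derivative_iff divide_inverse mult.commute)

lemma quot_inner:
  fixes f g :: "real \<Rightarrow> 'b::real_inner"
  assumes f: "((\<lambda>y. (f y - f x) /\<^sub>R (y - x)) \<longlongrightarrow> a) F"
    and g: "((\<lambda>y. (g y - g x) /\<^sub>R (y - x)) \<longlongrightarrow> b) F"
    and gc: "(g \<longlongrightarrow> g x) F"
  shows "((\<lambda>y. (inner (f y) (g y) - inner (f x) (g x)) /\<^sub>R (y - x)) \<longlongrightarrow> inner a (g x) + inner (f x) b) F"
proof -
  have e: "(inner (f y) (g y) - inner (f x) (g x)) /\<^sub>R (y - x) =
      inner ((f y - f x) /\<^sub>R (y - x)) (g y) + inner (f x) ((g y - g x) /\<^sub>R (y - x))" for y
    by (simp add: inner_diff_left inner_diff_right divide_inverse algebra_simps)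
  show ?thesis unfolding e by (intro tendsto_intros f g gc)
qed


locale flow = hc J p for J :: "'a::{real_inner,complete_space} \<Rightarrow> ereal" and p :: real +
  fixes u :: "real \<Rightarrow> 'a" and f :: 'a
  assumes gf: "gradient_flow J f u"
begin

definition z where
  "z t = (SOME \<zeta>. min_norm_subgrad J (u t) \<zeta> \<and> (u has_vector_derivative - \<zeta>) (at t within {t..}))"

lemma z_prop:
  assumes "t > 0"
  shows "min_norm_subgrad J (u t) (z t) \<and> (u has_vector_derivative - z t) (at t within {t..})"
proof -
  have "\<exists>\<zeta>. min_norm_subgrad J (u t) \<zeta> \<and> (u has_vector_derivative - \<zeta>) (at t within {t..})"
    using gf assms unfolding gradient_flow_def by blast
  then show ?thesis unfolding z_def by (rule someI_ex)
qed

lemma z_min: "t > 0 \<Longrightarrow> min_norm_subgrad J (u t) (z t)" using z_prop by blast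

lemma z_sub: "t > 0 \<Longrightarrow> z t \<in> subdiff J (u t)" using z_min by (simp add: min_norm_subgrad_def)

lemma uq: "t > 0 \<Longrightarrow> ((\<lambda>y. (u y - u t) /\<^sub>R (y - t)) \<longlongrightarrow> - z t) (at_right t)"
  using vd_quot[of u "- z t" t "{t..}"] z_prop[of t] by (simp add: at_within_Ici_at_right)

lemma ucont: "continuous_on {0..} u" using gf by (simp add: gradient_flow_def)

lemma u0: "u 0 = f" using gf by (simp add: gradient_flow_def)

lemma uc_right: "t \<ge> 0 \<Longrightarrow> (u \<longlongrightarrow> u t) (at_right t)"
proof -
  assume t: "t \<ge> 0"
  have "(u \<longlongrightarrow> u t) (at t within {0..})" using ucont t by (simp add: continuous_on_def)
  moreover have "at_right t \<le> at t within {0..}" by (rule at_le) (use t in auto)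
  ultimately show ?thesis by (rule tendsto_mono[rotated])
qed

lemma uc_at: "t > 0 \<Longrightarrow> (u \<longlongrightarrow> u t) (at t)"
proof -
  assume t: "t > 0"
  have "continuous_on {0<..} u" using ucont by (rule continuous_on_subset) auto
  then have "isCont u t" using t by (simp add: continuous_on_eq_continuous_at)
  then show ?thesis by (simp add: isCont_def)
qed

lemma ucomp: "continuous_on S c \<Longrightarrow> c ` S \<subseteq> {0..} \<Longrightarrow> continuous_on S (\<lambda>y. u (c y))"
  using continuous_on_compose2[OF ucont] by blast

definition g where "g t = jr (u t)"

lemma g_fin: "t > 0 \<Longrightarrow> J (u t) = ereal (g t)"
  using subdiff_fin[OF z_sub] by (simp add: g_def)

lemma g_ineq: "t > 0 \<Longrightarrow> s > 0 \<Longrightarrow> g t + inner (z t) (u s - u t) \<le> g s"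
  using subdiff_real[OF z_sub g_fin[of s]] by (simp add: g_def)

lemma g_nonneg: "g t \<ge> 0" by (simp add: g_def jr_nonneg)

lemma contraction:
  assumes h: "h > 0" and t: "0 < t" "t \<le> s"
  shows "norm (u (s + h) - u s) \<le> norm (u (t + h) - u t)"
proof -
  define D where "D y = u (y + h) - u y" for y
  define phi where "phi y = inner (D y) (D y)" for y
  have "phi s \<le> phi t"
  proof (rule dini[where f = phi and f' = "\<lambda>y. inner (z y - z (y + h)) (D y) + inner (D y) (z y - z (y + h))"])
    show "continuous_on {t..s} phi"
    proof -
      have "continuous_on {t..s} (\<lambda>y. u (y + h))" by (rule ucomp) (use t h in \<open>auto intro!: continuous_intros\<close>)
      moreover have "continuous_on {t..s} (\<lambda>y. u y)" by (rule ucomp) (use t in \<open>auto intro!: continuous_intros\<close>)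
      ultimately show ?thesis unfolding phi_def D_def by (intro continuous_intros)
    qed
  next
    fix y assume y: "t < y" "y < s"
    have q1: "((\<lambda>x. (u (x + h) - u (y + h)) /\<^sub>R (x - y)) \<longlongrightarrow> - z (y + h)) (at_right y)"
      by (rule quot_shift) (rule uq, use y t h in simp)
    have q2: "((\<lambda>x. (u x - u y) /\<^sub>R (x - y)) \<longlongrightarrow> - z y) (at_right y)" by (rule uq) (use y t in simp)
    have qD: "((\<lambda>x. (D x - D y) /\<^sub>R (x - y)) \<longlongrightarrow> z y - z (y + h)) (at_right y)"
    proof -
      have "((\<lambda>x. (u (x + h) - u (y + h)) /\<^sub>R (x - y) - (u x - u y) /\<^sub>R (x - y)) \<longlongrightarrow> - z (y + h) - - z y) (at_right y)"
        by (intro tendsto_intros q1 q2)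
      then show ?thesis by (simp add: D_def algebra_simps scaleR_diff_right)
    qed
    have Dc: "(D \<longlongrightarrow> D y) (at_right y)"
    proof -
      have "((\<lambda>x. u (x + h)) \<longlongrightarrow> u (y + h)) (at_right y)"
      proof -
        have fm: "filtermap (\<lambda>x. x + h) (at_right y) = at_right (y + h)"
          using filtermap_at_right_shift[of "-h" y] by simp
        have "(u \<longlongrightarrow> u (y + h)) (at_right (y + h))" by (rule uc_right) (use y t h in simp)
        then have "((u \<circ> (\<lambda>x. x + h)) \<longlongrightarrow> u (y + h)) (at_right y)"
          unfolding tendsto_compose_filtermap fm .
        then show ?thesis by (simp add: o_def)
      qed
      moreover have "(u \<longlongrightarrow> u y) (at_right y)" by (rule uc_right) (use y t in simp)
      ultimately show ?thesis unfolding D_def by (intro tendsto_intros)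
    qed
    show "(phi has_real_derivative inner (z y - z (y + h)) (D y) + inner (D y) (z y - z (y + h))) (at_right y)"
      unfolding quot_real phi_def by (rule quot_inner[OF qD qD Dc])
    have "inner (z (y + h) - z y) (u (y + h) - u y) \<ge> 0"
      by (rule subdiff_mono) (rule z_sub, use y t h in simp)+
    then show "inner (z y - z (y + h)) (D y) + inner (D y) (z y - z (y + h)) \<le> 0"
      by (simp add: D_def inner_commute inner_diff_left inner_diff_right)
  qed (use t in simp)
  then have "norm (D s) ^ 2 \<le> norm (D t) ^ 2" by (simp add: phi_def power2_norm_eq_inner)
  then show ?thesis by (simp add: D_def power2_le_iff_abs_le)
qed

lemma uq0: "t > 0 \<Longrightarrow> ((\<lambda>h. (u (t + h) - u t) /\<^sub>R h) \<longlongrightarrow> - z t) (at_right 0)"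
  using quot_shift[where u = u and x = 0 and h = t and v = "- z t"] uq[of t] by (simp add: add.commute)

lemma z_mono:
  assumes t: "0 < t" "t \<le> s"
  shows "norm (z s) \<le> norm (z t)"
proof -
  have "((\<lambda>h. norm ((u (s + h) - u s) /\<^sub>R h)) \<longlongrightarrow> norm (- z s)) (at_right 0)"
    by (intro tendsto_intros uq0) (use t in simp)
  moreover have "((\<lambda>h. norm ((u (t + h) - u t) /\<^sub>R h)) \<longlongrightarrow> norm (- z t)) (at_right 0)"
    by (intro tendsto_intros uq0) (use t in simp)
  moreover have "eventually (\<lambda>h. norm ((u (s + h) - u s) /\<^sub>R h) \<le> norm ((u (t + h) - u t) /\<^sub>R h)) (at_right 0)"
    using eventually_at_right_less[of "0::real"]
  proof (rule eventually_mono)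
    fix h :: real assume "0 < h"
    then show "norm ((u (s + h) - u s) /\<^sub>R h) \<le> norm ((u (t + h) - u t) /\<^sub>R h)"
      using contraction[of h t s] t by (simp add: divide_right_mono)
  qed
  ultimately show ?thesis by (simp add: tendsto_le[OF trivial_limit_at_right_real])
qed

end

context flow begin

lemma g_lip:
  assumes a: "0 < a" "a \<le> t" "a \<le> s"
  shows "\<bar>g s - g t\<bar> \<le> norm (z a) * norm (u s - u t)"
proof -
  have zt: "norm (z t) \<le> norm (z a)" and zs: "norm (z s) \<le> norm (z a)" using z_mono a by auto
  have "g t + inner (z t) (u s - u t) \<le> g s" by (rule g_ineq) (use a in auto)
  moreover have "g s + inner (z s) (u t - u s) \<le> g t" by (rule g_ineq) (use a in auto)
  moreover have "\<bar>inner (z t) (u s - u t)\<bar> \<le> norm (z a) * norm (u s - u t)"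
    using Cauchy_Schwarz_ineq2[of "z t" "u s - u t"] zt by (meson mult_right_mono norm_ge_zero order_trans)
  moreover have "\<bar>inner (z s) (u t - u s)\<bar> \<le> norm (z a) * norm (u s - u t)"
    using Cauchy_Schwarz_ineq2[of "z s" "u t - u s"] zs by (metis mult_right_mono norm_ge_zero order_trans norm_minus_commute)
  ultimately show ?thesis by linarith
qed

lemma g_at: "t > 0 \<Longrightarrow> (g \<longlongrightarrow> g t) (at t)"
proof -
  assume t: "t > 0"
  have "((\<lambda>s. g s - g t) \<longlongrightarrow> 0) (at t)"
  proof (rule Lim_null_comparison)
    have "eventually (\<lambda>s. s > t / 2) (at t)"
      using t by (intro order_tendstoD(1)[OF tendsto_ident_at]) simp
    then show "eventually (\<lambda>s. norm (g s - g t) \<le> norm (z (t/2)) * norm (u s - u t)) (at t)"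
    proof (rule eventually_mono)
      fix s assume "s > t / 2"
      then show "norm (g s - g t) \<le> norm (z (t/2)) * norm (u s - u t)"
        using g_lip[of "t/2" t s] t by simp
    qed
    have "((\<lambda>s. u s - u t) \<longlongrightarrow> 0) (at t)" using uc_at[OF t] by (simp add: LIM_zero_iff)
    then show "((\<lambda>s. norm (z (t/2)) * norm (u s - u t)) \<longlongrightarrow> 0) (at t)"
      by (metis mult_zero_right tendsto_mult_left tendsto_norm_zero)
  qed
  then show ?thesis by (simp add: LIM_zero_iff)
qed

lemma g_cont: "continuous_on {a..b} g" if "a > 0"
  using g_at that by (intro continuous_at_imp_continuous_on) (auto simp: isCont_def)

lemma z_rc:
  assumes t: "t > 0"
  shows "(z \<longlongrightarrow> z t) (at_right t)"
proof (rule approx_conv[OF z_min[OF t]])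
  show "eventually (\<lambda>s. norm (z s) \<le> norm (z t)) (at_right t)"
    using eventually_at_right_less[of t] by (rule eventually_mono) (use z_mono t in auto)
next
  fix d :: real assume d: "d > 0"
  define c where "c = d / (2 * norm (z t) + 1)"
  have c: "c > 0" using d by (simp add: c_def add_nonneg_pos)
  have cz: "2 * norm (z t) * c \<le> d"
  proof -
    have "2 * norm (z t) * c \<le> (2 * norm (z t) + 1) * c" using c by (simp add: mult_right_mono)
    also have "\<dots> = d"
    proof -
      have "2 * norm (z t) + 1 > 0" by (simp add: add_nonneg_pos)
      then show ?thesis unfolding c_def by simp
    qed
    finally show ?thesis .
  qed
  have "eventually (\<lambda>s. dist (u s) (u t) < c) (at_right t)"
    using uc_right[of t] t c by (simp add: tendsto_iff)
  moreover have "eventually (\<lambda>s. s > t) (at_right t)" by (rule eventually_at_right_less)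
  ultimately show "eventually (\<lambda>s. z s \<in> Sd (u t) d) (at_right t)"
  proof eventually_elim
    case (elim s)
    then have s: "s > t" and us: "norm (u s - u t) < c" by (auto simp: dist_norm)
    have zs: "norm (z s) \<le> norm (z t)" using z_mono s t by simp
    have gl: "\<bar>g s - g t\<bar> \<le> norm (z t) * norm (u s - u t)" using g_lip[of t t s] s t by simp
    have i1: "inner (z s) (u s - u t) \<le> norm (z t) * norm (u s - u t)"
      using norm_cauchy_schwarz[of "z s" "u s - u t"] zs by (meson mult_right_mono norm_ge_zero order_trans)
    have b: "norm (z t) * norm (u s - u t) \<le> norm (z t) * c" using us by (simp add: mult_left_mono)
    show ?case unfolding Sd_iff
    proof (intro allI impI)
      fix v assume v: "J v \<noteq> \<infinity>"
      have "jr (u s) + inner (z s) (v - u s) \<le> jr v" by (rule subdiff_real'[OF z_sub v]) (use s t in simp)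
      moreover have "inner (z s) (v - u t) = inner (z s) (v - u s) + inner (z s) (u s - u t)"
        by (simp add: inner_diff_right)
      ultimately show "inner (z s) (v - u t) \<le> jr v - jr (u t) + d"
        using gl i1 b cz unfolding g_def by linarith
    qed
  qed
qed

lemma gq: "t > 0 \<Longrightarrow> (g has_real_derivative (- (norm (z t) ^ 2))) (at_right t)"
proof -
  assume t: "t > 0"
  define Q where "Q s = (u s - u t) /\<^sub>R (s - t)" for s
  have Q: "(Q \<longlongrightarrow> - z t) (at_right t)" unfolding Q_def by (rule uq[OF t])
  have L: "((\<lambda>s. inner (z t) (Q s)) \<longlongrightarrow> (- (norm (z t) ^ 2))) (at_right t)"
    using Q by (auto intro!: tendsto_eq_intros simp: power2_norm_eq_inner)
  have U: "((\<lambda>s. inner (z s) (Q s)) \<longlongrightarrow> (- (norm (z t) ^ 2))) (at_right t)"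
    using Q z_rc[OF t] by (auto intro!: tendsto_eq_intros simp: power2_norm_eq_inner)
  have ev: "eventually (\<lambda>s. s > t) (at_right t)" by (rule eventually_at_right_less)
  have "((\<lambda>s. (g s - g t) /\<^sub>R (s - t)) \<longlongrightarrow> (- (norm (z t) ^ 2))) (at_right t)"
  proof (rule tendsto_sandwich[OF _ _ L U])
    show "eventually (\<lambda>s. inner (z t) (Q s) \<le> (g s - g t) /\<^sub>R (s - t)) (at_right t)"
      using ev
    proof (rule eventually_mono)
      fix s assume s: "s > t"
      have "g t + inner (z t) (u s - u t) \<le> g s" by (rule g_ineq) (use s t in auto)
      then have "inner (z t) (u s - u t) / (s - t) \<le> (g s - g t) / (s - t)"
        using s by (intro divide_right_mono) auto
      then show "inner (z t) (Q s) \<le> (g s - g t) /\<^sub>R (s - t)"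
        by (simp add: Q_def divide_inverse mult.commute)
    qed
    show "eventually (\<lambda>s. (g s - g t) /\<^sub>R (s - t) \<le> inner (z s) (Q s)) (at_right t)"
      using ev
    proof (rule eventually_mono)
      fix s assume s: "s > t"
      have "g s + inner (z s) (u t - u s) \<le> g t" by (rule g_ineq) (use s t in auto)
      then have "(g s - g t) / (s - t) \<le> inner (z s) (u s - u t) / (s - t)"
        using s by (intro divide_right_mono) (auto simp: inner_diff_right)
      then show "(g s - g t) /\<^sub>R (s - t) \<le> inner (z s) (Q s)"
        by (simp add: Q_def divide_inverse mult.commute)
    qed
  qed
  then show ?thesis by (simp add: quot_real)
qed

lemma Nq: "t > 0 \<Longrightarrow> ((\<lambda>s. inner (u s) (u s)) has_real_derivative (- 2 * (p * g t))) (at_right t)"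
proof -
  assume t: "t > 0"
  have "((\<lambda>s. (inner (u s) (u s) - inner (u t) (u t)) /\<^sub>R (s - t)) \<longlongrightarrow> inner (- z t) (u t) + inner (u t) (- z t)) (at_right t)"
    by (rule quot_inner[OF uq[OF t] uq[OF t] uc_right]) (use t in simp)
  moreover have "inner (- z t) (u t) + inner (u t) (- z t) = - 2 * (p * g t)"
    using euler[OF z_sub[OF t]] by (simp add: inner_commute g_def)
  ultimately show ?thesis by (simp add: quot_real)
qed

lemma orth:
  assumes n: "J n = 0" and t: "t \<ge> 0"
  shows "inner (u t) n = inner f n"
proof -
  have cont: "continuous_on {0..t} (\<lambda>s. inner (u s) n)"
    using ucomp[of "{0..t}" "\<lambda>s. s"] by (auto intro!: continuous_intros)
  have der: "((\<lambda>s. inner (u s) n) has_real_derivative 0) (at_right s)" if "0 < s" for s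
  proof -
    have "((\<lambda>y. (inner (u y) n - inner (u s) n) /\<^sub>R (y - s)) \<longlongrightarrow> inner (- z s) n + inner (u s) 0) (at_right s)"
      by (rule quot_inner[where g = "\<lambda>_. n", OF uq[OF that]]) auto
    then show ?thesis using null_orth[OF z_sub[OF that] n] by (simp add: quot_real)
  qed
  have "inner (u t) n \<le> inner (u 0) n" by (rule dini[OF t cont der]) auto
  moreover have "inner (u 0) n \<le> inner (u t) n" by (rule dini_inc[OF t cont der]) auto
  ultimately show ?thesis using u0 by simp
qed

lemma N_mono:
  assumes "0 \<le> t" "t \<le> s"
  shows "norm (u s) \<le> norm (u t)"
proof -
  have "inner (u s) (u s) \<le> inner (u t) (u t)"
  proof (rule dini[where f = "\<lambda>s. inner (u s) (u s)", OF assms(2) _ Nq])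
    show "continuous_on {t..s} (\<lambda>s. inner (u s) (u s))"
      using ucomp[of "{t..s}" "\<lambda>s. s"] assms by (auto intro!: continuous_intros)
    show "- 2 * (p * g x) \<le> 0" for x using p1 g_nonneg[of x] by simp
  qed (use assms in auto)
  then show ?thesis by (simp add: power2_norm_eq_inner[symmetric] power2_le_iff_abs_le)
qed

lemma g_mono:
  assumes "0 < t" "t \<le> s"
  shows "g s \<le> g t"
  by (rule dini[OF assms(2) g_cont gq]) (use assms in auto)

end

lemma norm_powr_inner:
  fixes x :: "'a::real_inner"
  shows "norm x powr a = (inner x x) powr (a / 2)"
proof (cases "x = 0")
  case True then show ?thesis by simp
next
  case False
  then have e: "norm x powr 2 = inner x x" by (subst powr_numeral) (auto simp: power2_norm_eq_inner)
  have "(inner x x) powr (a / 2) = (norm x powr 2) powr (a / 2)" using e by simp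
  also have "\<dots> = norm x powr (2 * (a / 2))" by (rule powr_powr)
  also have "\<dots> = norm x powr a" by simp
  finally show ?thesis by simp
qed

context flow begin

definition Lam where "Lam t = p * g t / norm (u t) powr p"

lemma Lam_alt: "Lam t = p * g t * (inner (u t) (u t)) powr (- p / 2)"
  by (simp add: Lam_def norm_powr_inner powr_minus_divide)

lemma Lam_der:
  assumes t: "t > 0" and ut: "u t \<noteq> 0"
  shows "\<exists>D. (Lam has_real_derivative D) (at_right t) \<and> D \<le> 0"
proof -
  define N where "N = inner (u t) (u t)"
  have N: "N > 0" using ut by (simp add: N_def)
  have dN: "((\<lambda>s. inner (u s) (u s)) has_real_derivative (- 2 * (p * g t))) (at_right t)" by (rule Nq[OF t])
  have dP: "((\<lambda>s. (inner (u s) (u s)) powr (- p / 2)) has_real_derivative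
      ((- p / 2) * N powr (- p / 2 - 1)) * (- 2 * (p * g t))) (at_right t)"
    unfolding N_def by (rule DERIV_chain2[OF has_real_derivative_powr dN]) (use N in \<open>simp add: N_def\<close>)
  have dg: "((\<lambda>s. p * g s) has_real_derivative p * (- (norm (z t) ^ 2))) (at_right t)"
    by (rule DERIV_cmult[OF gq[OF t]])
  define D where "D = p * (- (norm (z t) ^ 2)) * N powr (- p / 2) + p * g t * (((- p / 2) * N powr (- p / 2 - 1)) * (- 2 * (p * g t)))"
  have "((\<lambda>s. p * g s * (inner (u s) (u s)) powr (- p / 2)) has_real_derivative D) (at_right t)"
    using DERIV_mult[OF dg dP] by (rule DERIV_cong) (simp add: D_def N_def algebra_simps)
  then have der: "(Lam has_real_derivative D) (at_right t)" by (simp add: Lam_alt[abs_def])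
  have cs: "(p * g t) ^ 2 \<le> norm (z t) ^ 2 * N"
  proof -
    have "inner (z t) (u t) = p * g t" using euler[OF z_sub[OF t]] by (simp add: g_def)
    moreover have "inner (z t) (u t) ^ 2 \<le> inner (z t) (z t) * inner (u t) (u t)" by (rule Cauchy_Schwarz_ineq)
    ultimately show ?thesis by (simp add: N_def power2_norm_eq_inner)
  qed
  have eq: "N powr (- p / 2) = N powr (- p / 2 - 1) * N"
  proof -
    have "N powr (- p / 2 - 1) * N = N powr (- p / 2 - 1) * N powr 1" using N by simp
    also have "\<dots> = N powr ((- p / 2 - 1) + 1)" by (simp only: powr_add)
    finally show ?thesis by simp
  qed
  have "D = p * N powr (- p / 2 - 1) * ((p * g t) ^ 2 - norm (z t) ^ 2 * N)"
    unfolding D_def eq by (simp add: algebra_simps power2_eq_square)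
  moreover have "p * N powr (- p / 2 - 1) \<ge> 0" using p1 by simp
  ultimately have "D \<le> 0" using cs by (simp add: mult_nonneg_nonpos)
  with der show ?thesis by blast
qed

lemma unorm_cont: "continuous_on {a..b} (\<lambda>s. norm (u s))" if "a \<ge> 0"
  using ucomp[of "{a..b}" "\<lambda>s. s"] that by (auto intro!: continuous_intros)

lemma Lam_cont:
  assumes a: "a > 0" and nz: "\<And>s. a \<le> s \<Longrightarrow> s \<le> b \<Longrightarrow> u s \<noteq> 0"
  shows "continuous_on {a..b} Lam"
proof -
  have "continuous_on {a..b} (\<lambda>s. norm (u s) powr p)"
    using unorm_cont[of a b] a nz by (intro continuous_on_powr') (auto intro: continuous_on_const)
  moreover have "continuous_on {a..b} u" using ucomp[of "{a..b}" "\<lambda>s. s"] a by auto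
  ultimately show ?thesis unfolding Lam_def[abs_def] using g_cont[of a b] a nz
    by (intro continuous_intros) auto
qed

lemma Lam_mono:
  assumes t: "0 < t" "t \<le> s" and us: "u s \<noteq> 0"
  shows "Lam s \<le> Lam t"
proof -
  have nz: "u y \<noteq> 0" if "t \<le> y" "y \<le> s" for y
    using N_mono[of y s] that t us by auto
  obtain D where D: "\<And>y. t < y \<Longrightarrow> y < s \<Longrightarrow> (Lam has_real_derivative D y) (at_right y) \<and> D y \<le> 0"
  proof -
    have "\<forall>y. \<exists>d. t < y \<and> y < s \<longrightarrow> (Lam has_real_derivative d) (at_right y) \<and> d \<le> 0"
      using Lam_der nz t by (metis less_eq_real_def less_trans)
    then show ?thesis using that by metis
  qed
  show ?thesis
    by (rule dini[where f' = D, OF t(2) Lam_cont]) (use D nz t in auto)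
qed

definition phi where "phi t = norm (u t) powr (2 - p)"

lemma phi_der:
  assumes t: "t > 0" and ut: "u t \<noteq> 0" and p2: "p < 2"
  shows "(phi has_real_derivative (- (2 - p) * Lam t)) (at_right t)"
proof -
  define N where "N = inner (u t) (u t)"
  have N: "N > 0" using ut by (simp add: N_def)
  have dN: "((\<lambda>s. inner (u s) (u s)) has_real_derivative (- 2 * (p * g t))) (at_right t)" by (rule Nq[OF t])
  have dP: "((\<lambda>s. (inner (u s) (u s)) powr ((2 - p) / 2)) has_real_derivative
      (((2 - p) / 2) * N powr ((2 - p) / 2 - 1)) * (- 2 * (p * g t))) (at_right t)"
    unfolding N_def by (rule DERIV_chain2[OF has_real_derivative_powr dN]) (use N in \<open>simp add: N_def\<close>)
  have e1: "phi = (\<lambda>s. (inner (u s) (u s)) powr ((2 - p) / 2))"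
    by (simp add: phi_def[abs_def] norm_powr_inner)
  have e2: "(2 - p) / 2 - 1 = - p / 2" by (simp add: field_simps)
  have "(((2 - p) / 2) * N powr ((2 - p) / 2 - 1)) * (- 2 * (p * g t)) = - (2 - p) * Lam t"
    unfolding e2 Lam_alt N_def by (simp add: field_simps algebra_simps)
  then show ?thesis using dP e1 by simp
qed

lemma phi_cont: "continuous_on {a..b} phi" if "a \<ge> 0" "p < 2"
  unfolding phi_def[abs_def] using unorm_cont[of a b] that
  by (intro continuous_on_powr') (auto intro: continuous_on_const)

lemma tg_bound:
  assumes t: "t > 0"
  shows "t * g t \<le> (norm f ^ 2 - norm (u t) ^ 2) / (2 * p)"
proof -
  define psi where "psi s = inner (u s) (u s) + 2 * p * g t * s" for s
  have "psi t \<le> psi 0"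
  proof (rule dini[where f = psi and f' = "\<lambda>s. - 2 * (p * g s) + 2 * p * g t"])
    show "continuous_on {0..t} psi" unfolding psi_def[abs_def]
      using ucomp[of "{0..t}" "\<lambda>s. s"] by (auto intro!: continuous_intros)
    show "(psi has_real_derivative - 2 * (p * g x) + 2 * p * g t) (at_right x)" if "0 < x" "x < t" for x
      unfolding psi_def using DERIV_add[OF Nq[OF that(1)] DERIV_cmult[OF DERIV_ident, of "2 * p * g t"]]
      by simp
    show "- 2 * (p * g x) + 2 * p * g t \<le> 0" if "0 < x" "x < t" for x
      using g_mono[of x t] that p1 by simp
  qed (use t in simp)
  then have "norm (u t) ^ 2 + 2 * p * (t * g t) \<le> norm f ^ 2"
    by (simp add: psi_def u0 power2_norm_eq_inner algebra_simps)
  then show ?thesis using p1 by (simp add: field_simps)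
qed

lemma g_le_Jf:
  assumes t: "t > 0" and fin: "J f = ereal jf"
  shows "g t \<le> jf"
proof -
  define H where "H s = s * (g s - jf) + inner (u s - f) (u s - f) / 2" for s
  have H_le: "H t \<le> H r" if r: "0 < r" "r \<le> t" for r
  proof (rule dini[where f = H and f' = "\<lambda>s. (g s - jf) + s * (- (norm (z s) ^ 2)) + inner (- z s) (u s - f)"])
    show "continuous_on {r..t} H" unfolding H_def[abs_def]
      using g_cont[of r t] ucomp[of "{r..t}" "\<lambda>s. s"] r by (auto intro!: continuous_intros)
  next
    fix x assume x: "r < x" "x < t"
    then have x0: "x > 0" using r by simp
    have d1: "((\<lambda>s. s * (g s - jf)) has_real_derivative 1 * (g x - jf) + x * (- (norm (z x) ^ 2))) (at_right x)"
      using DERIV_mult[OF DERIV_ident DERIV_diff[OF gq[OF x0] DERIV_const]] by (rule DERIV_cong) simp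
    have q: "((\<lambda>y. (inner (u y - f) (u y - f) - inner (u x - f) (u x - f)) /\<^sub>R (y - x)) \<longlongrightarrow>
        inner (- z x) (u x - f) + inner (u x - f) (- z x)) (at_right x)"
    proof (rule quot_inner)
      show "((\<lambda>y. (u y - f - (u x - f)) /\<^sub>R (y - x)) \<longlongrightarrow> - z x) (at_right x)" using uq[OF x0] by simp
      then show "((\<lambda>y. (u y - f - (u x - f)) /\<^sub>R (y - x)) \<longlongrightarrow> - z x) (at_right x)" .
      show "((\<lambda>y. u y - f) \<longlongrightarrow> u x - f) (at_right x)" using uc_right[of x] x0 by (intro tendsto_intros) auto
    qed
    then have d2: "((\<lambda>s. inner (u s - f) (u s - f) / 2) has_real_derivative inner (- z x) (u x - f)) (at_right x)"
    proof -
      have "((\<lambda>s. inner (u s - f) (u s - f)) has_real_derivative inner (- z x) (u x - f) + inner (u x - f) (- z x)) (at_right x)"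
        using q by (simp add: quot_real)
      from DERIV_cdivide[OF this, of 2] show ?thesis by (simp add: inner_commute)
    qed
    show "(H has_real_derivative (g x - jf) + x * (- (norm (z x) ^ 2)) + inner (- z x) (u x - f)) (at_right x)"
      unfolding H_def using DERIV_add[OF d1 d2] by simp
    have "g x + inner (z x) (f - u x) \<le> jf" using subdiff_real[OF z_sub[OF x0] fin] by (simp add: g_def)
    then have "inner (- z x) (u x - f) \<le> jf - g x" by (simp add: inner_diff_right inner_minus_left)
    moreover have "x * (- (norm (z x) ^ 2)) \<le> 0" using x0 by (simp add: mult_nonneg_nonneg)
    ultimately show "(g x - jf) + x * (- (norm (z x) ^ 2)) + inner (- z x) (u x - f) \<le> 0" by linarith
  qed (use r in simp)
  have lim: "(H \<longlongrightarrow> 0) (at_right 0)"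
  proof -
    have l1: "((\<lambda>s. s * g s) \<longlongrightarrow> 0) (at_right 0)"
    proof (rule tendsto_sandwich[where f = "\<lambda>_. 0" and h = "\<lambda>s. (norm f ^ 2 - norm (u s) ^ 2) / (2 * p)"])
      show "eventually (\<lambda>s. 0 \<le> s * g s) (at_right 0)"
        using eventually_at_right_less[of "0::real"] by (rule eventually_mono) (simp add: g_nonneg)
      show "eventually (\<lambda>s. s * g s \<le> (norm f ^ 2 - norm (u s) ^ 2) / (2 * p)) (at_right 0)"
        using eventually_at_right_less[of "0::real"] by (rule eventually_mono) (rule tg_bound)
      have "((\<lambda>s. (norm f ^ 2 - norm (u s) ^ 2) / (2 * p)) \<longlongrightarrow> (norm f ^ 2 - norm (u 0) ^ 2) / (2 * p)) (at_right 0)"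
        using uc_right[of 0] p1 by (intro tendsto_intros) auto
      then show "((\<lambda>s. (norm f ^ 2 - norm (u s) ^ 2) / (2 * p)) \<longlongrightarrow> 0) (at_right 0)" by (simp add: u0)
    qed simp
    have l2: "((\<lambda>s. s * jf) \<longlongrightarrow> 0 * jf) (at_right 0)" by (intro tendsto_intros)
    have l3: "((\<lambda>s. inner (u s - f) (u s - f) / 2) \<longlongrightarrow> inner (u 0 - f) (u 0 - f) / 2) (at_right 0)"
      using uc_right[of 0] by (intro tendsto_intros) auto
    have "((\<lambda>s. s * g s - s * jf + inner (u s - f) (u s - f) / 2) \<longlongrightarrow> 0 - 0 * jf + inner (u 0 - f) (u 0 - f) / 2) (at_right 0)"
      by (rule tendsto_add[OF tendsto_diff[OF l1 l2] l3])
    then show ?thesis unfolding H_def[abs_def] by (simp add: u0 right_diff_distrib)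
  qed
  have "H t \<le> 0"
  proof (rule tendsto_le[OF trivial_limit_at_right_real lim tendsto_const])
    show "eventually (\<lambda>r. H t \<le> H r) (at_right 0)"
      using eventually_at_right_real[OF t] by (rule eventually_mono) (auto intro: H_le)
  qed
  moreover have "inner (u t - f) (u t - f) / 2 \<ge> 0" by simp
  ultimately have "t * (g t - jf) \<le> 0" unfolding H_def by linarith
  then show ?thesis using t by (simp add: mult_le_0_iff)
qed

end

locale flow2 = flow J p u f for J :: "'a::{real_inner,complete_space} \<Rightarrow> ereal" and p u f +
  assumes fH: "f \<in> H0 J" and l1pos: "lambda1 p J > 0" and p2: "p < 2"
begin

lemma f_nz: "f \<noteq> 0" using fH by (simp add: H0_def)

lemma u_H0: "t \<ge> 0 \<Longrightarrow> u t \<noteq> 0 \<Longrightarrow> u t \<in> H0 J"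
  using orth fH by (auto simp: H0_def null_set_def)

lemma lam_le:
  assumes t: "t > 0" and ut: "u t \<noteq> 0"
  shows "lambda1 p J \<le> ereal (Lam t)"
proof -
  have "lambda1 p J \<le> ereal p * J (u t) / ereal (norm (u t) powr p)"
    unfolding lambda1_def by (rule INF_lower) (rule u_H0, use t ut in auto)
  also have "\<dots> = ereal (Lam t)"
    using g_fin[OF t] ut by (simp add: Lam_def)
  finally show ?thesis .
qed

definition l1 where "l1 = real_of_ereal (lambda1 p J)"

lemma l1_props:
  assumes t: "t > 0" and ut: "u t \<noteq> 0"
  shows "lambda1 p J = ereal l1" "l1 > 0"
proof -
  have "lambda1 p J \<noteq> \<infinity>" using lam_le[OF t ut] by auto
  moreover have "lambda1 p J \<noteq> - \<infinity>" using l1pos by auto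
  ultimately show e: "lambda1 p J = ereal l1" unfolding l1_def by (cases "lambda1 p J") auto
  show "l1 > 0" using l1pos e by simp
qed

lemma phi_nonneg: "phi t \<ge> 0" by (simp add: phi_def)

lemma ex_zero: "\<exists>t0>0. u t0 = 0"
proof (rule ccontr)
  assume "\<not> ?thesis"
  then have nz: "\<And>t. t > 0 \<Longrightarrow> u t \<noteq> 0" by auto
  have e: "lambda1 p J = ereal l1" and l: "l1 > 0" using l1_props[of 1] nz[of 1] by auto
  define T0 where "T0 = phi 0 / ((2 - p) * l1) + 1"
  have T0: "T0 > 0" using l p2 phi_nonneg[of 0] by (simp add: T0_def add_nonneg_pos)
  define psi where "psi s = phi s + (2 - p) * l1 * s" for s
  have "psi T0 \<le> psi 0"
  proof (rule dini[where f = psi and f' = "\<lambda>s. - (2 - p) * Lam s + (2 - p) * l1"])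
    show "continuous_on {0..T0} psi" unfolding psi_def[abs_def]
      using phi_cont[of 0 T0] p2 by (auto intro!: continuous_intros)
    show "(psi has_real_derivative - (2 - p) * Lam x + (2 - p) * l1) (at_right x)" if "0 < x" "x < T0" for x
      unfolding psi_def[abs_def] using DERIV_add[OF phi_der[OF that(1) nz[OF that(1)] p2] DERIV_cmult[OF DERIV_ident, of "(2 - p) * l1"]]
      by simp
    show "- (2 - p) * Lam x + (2 - p) * l1 \<le> 0" if "0 < x" "x < T0" for x
    proof -
      have "l1 \<le> Lam x" using lam_le[OF that(1) nz[OF that(1)]] e by simp
      then have "0 \<le> (2 - p) * (Lam x - l1)" using p2 by (intro mult_nonneg_nonneg) auto
      then show ?thesis by (simp add: algebra_simps)
    qed
  qed (use T0 in simp)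
  then have "(2 - p) * l1 * T0 \<le> phi 0" using phi_nonneg[of T0] by (simp add: psi_def)
  moreover have "(2 - p) * l1 * T0 = phi 0 + (2 - p) * l1" using l p2 by (simp add: T0_def field_simps)
  moreover have "(2 - p) * l1 > 0" using l p2 by simp
  ultimately show False by linarith
qed

lemma zero_stays: "0 \<le> t \<Longrightarrow> t \<le> s \<Longrightarrow> u t = 0 \<Longrightarrow> u s = 0"
  using N_mono[of t s] by simp

definition Tx where "Tx = extinction_time u"

definition EE where "EE = {T. T > 0 \<and> (\<forall>t\<ge>T. u t = 0)}"

lemma EE_ne: "EE \<noteq> {}"
proof -
  obtain t0 where "t0 > 0" "u t0 = 0" using ex_zero by blast
  then have "t0 \<in> EE" using zero_stays[of t0] by (auto simp: EE_def)
  then show ?thesis by auto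
qed

lemma EE_bdd: "bdd_below EE" by (rule bdd_belowI[of _ 0]) (auto simp: EE_def)

lemma Tx_Inf: "Tx = Inf EE" by (simp add: Tx_def extinction_time_def EE_def)

lemma Tx_nonneg: "Tx \<ge> 0"
  unfolding Tx_Inf using EE_ne by (intro cInf_greatest) (auto simp: EE_def)

lemma after_Tx: "t > Tx \<Longrightarrow> u t = 0"
proof -
  assume "t > Tx"
  then obtain T where "T \<in> EE" "T < t" using cInf_less_iff[OF EE_ne EE_bdd] unfolding Tx_Inf by auto
  then show "u t = 0" by (auto simp: EE_def)
qed

lemma u_Tx0: "((\<lambda>t. u t) \<longlongrightarrow> 0) (at_right Tx)"
proof -
  have "eventually (\<lambda>t. u t = 0) (at_right Tx)"
    using eventually_at_right_less[of Tx] by (rule eventually_mono) (rule after_Tx)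
  then show ?thesis by (rule tendsto_eventually)
qed

lemma u_Tx: "u Tx = 0"
  using tendsto_unique[OF trivial_limit_at_right_real uc_right[OF Tx_nonneg] u_Tx0] .

lemma Tx_pos: "Tx > 0"
proof (rule ccontr)
  assume "\<not> Tx > 0"
  then have "Tx = 0" using Tx_nonneg by simp
  then show False using u_Tx u0 f_nz by simp
qed

lemma before_Tx: "0 \<le> t \<Longrightarrow> t < Tx \<Longrightarrow> u t \<noteq> 0"
proof
  assume t: "0 \<le> t" "t < Tx" and ut: "u t = 0"
  have "t > 0" using t ut u0 f_nz by (cases "t = 0") auto
  then have "t \<in> EE" using zero_stays[of t] ut by (auto simp: EE_def)
  then have "Tx \<le> t" unfolding Tx_Inf by (rule cInf_lower[OF _ EE_bdd])
  then show False using t by simp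
qed

lemma l1_ok: "lambda1 p J = ereal l1" "l1 > 0"
  using l1_props[of "Tx / 2"] before_Tx[of "Tx / 2"] Tx_pos by auto

lemma lower:
  assumes t: "0 \<le> t" "t < Tx"
  shows "(2 - p) * l1 * (Tx - t) \<le> phi t"
proof -
  define psi where "psi s = phi s + (2 - p) * l1 * s" for s
  have "psi Tx \<le> psi t"
  proof (rule dini[where f = psi and f' = "\<lambda>s. - (2 - p) * Lam s + (2 - p) * l1"])
    show "continuous_on {t..Tx} psi" unfolding psi_def[abs_def]
      using phi_cont[of t Tx] p2 t by (auto intro!: continuous_intros)
    fix x assume x: "t < x" "x < Tx"
    then have x0: "x > 0" and ux: "u x \<noteq> 0" using t before_Tx[of x] by auto
    show "(psi has_real_derivative - (2 - p) * Lam x + (2 - p) * l1) (at_right x)"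
      unfolding psi_def[abs_def] using DERIV_add[OF phi_der[OF x0 ux p2] DERIV_cmult[OF DERIV_ident, of "(2 - p) * l1"]]
      by simp
    have "l1 \<le> Lam x" using lam_le[OF x0 ux] l1_ok by simp
    then have "0 \<le> (2 - p) * (Lam x - l1)" using p2 by (intro mult_nonneg_nonneg) auto
    then show "- (2 - p) * Lam x + (2 - p) * l1 \<le> 0" by (simp add: algebra_simps)
  qed (use t in simp)
  then show ?thesis using u_Tx by (simp add: psi_def phi_def algebra_simps)
qed

lemma upper:
  assumes t: "0 < t" "t < Tx"
  shows "phi t \<le> (2 - p) * (Tx - t) * Lam t"
proof -
  define psi where "psi s = phi s + (2 - p) * Lam t * s" for s
  have "psi t \<le> psi Tx"
  proof (rule dini_inc[where f = psi and f' = "\<lambda>s. - (2 - p) * Lam s + (2 - p) * Lam t"])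
    show "continuous_on {t..Tx} psi" unfolding psi_def[abs_def]
      using phi_cont[of t Tx] p2 t by (auto intro!: continuous_intros)
    fix x assume x: "t < x" "x < Tx"
    then have x0: "x > 0" and ux: "u x \<noteq> 0" using t before_Tx[of x] by auto
    show "(psi has_real_derivative - (2 - p) * Lam x + (2 - p) * Lam t) (at_right x)"
      unfolding psi_def[abs_def] using DERIV_add[OF phi_der[OF x0 ux p2] DERIV_cmult[OF DERIV_ident, of "(2 - p) * Lam t"]]
      by simp
    have "Lam x \<le> Lam t" by (rule Lam_mono) (use x t ux in auto)
    then have "0 \<le> (2 - p) * (Lam t - Lam x)" using p2 by (intro mult_nonneg_nonneg) auto
    then show "- (2 - p) * Lam x + (2 - p) * Lam t \<ge> 0" by (simp add: algebra_simps)
  qed (use t in simp)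
  then show ?thesis using u_Tx by (simp add: psi_def phi_def algebra_simps)
qed

end

context flow2 begin

lemma upper0:
  assumes fin: "J f = ereal jf"
  shows "phi 0 \<le> (2 - p) * Tx * (p * jf / norm f powr p)"
proof -
  define R where "R s = (2 - p) * (Tx - s) * (p * jf / norm (u s) powr p)" for s
  have ev: "eventually (\<lambda>s. phi s \<le> R s) (at_right 0)"
    using eventually_at_right_real[OF Tx_pos]
  proof (rule eventually_mono)
    fix s assume s: "s \<in> {0<..<Tx}"
    then have s0: "s > 0" and sT: "s < Tx" and us: "u s \<noteq> 0" using before_Tx[of s] by auto
    have "phi s \<le> (2 - p) * (Tx - s) * Lam s" by (rule upper) (use s0 sT in auto)
    also have "\<dots> \<le> R s"
    proof -
      have "p * g s \<le> p * jf" using g_le_Jf[OF s0 fin] p1 by simp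
      then have "Lam s \<le> p * jf / norm (u s) powr p" unfolding Lam_def by (rule divide_right_mono) simp
      then show ?thesis unfolding R_def by (rule mult_left_mono) (use p2 sT in auto)
    qed
    finally show "phi s \<le> R s" .
  qed
  have "(phi \<longlongrightarrow> phi 0) (at_right 0)"
  proof -
    have "(phi \<longlongrightarrow> phi 0) (at 0 within {0..Tx})"
      using phi_cont[of 0 Tx] p2 Tx_pos by (simp add: continuous_on_def)
    then show ?thesis using Tx_pos by (simp add: at_within_Icc_at_right)
  qed
  moreover have "(R \<longlongrightarrow> (2 - p) * (Tx - 0) * (p * jf / norm (u 0) powr p)) (at_right 0)"
    unfolding R_def[abs_def] using uc_right[of 0] u0 f_nz by (intro tendsto_intros) auto
  ultimately have "phi 0 \<le> (2 - p) * (Tx - 0) * (p * jf / norm (u 0) powr p)"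
    using ev by (intro tendsto_le[OF trivial_limit_at_right_real]) auto
  then show ?thesis by (simp add: u0)
qed

lemma wnorm:
  assumes t: "0 \<le> t" "t < Tx"
  shows "norm (u t /\<^sub>R ((1 - t / Tx) powr (1 / (2 - p)))) powr (2 - p) = phi t / (1 - t / Tx)"
proof -
  have b: "1 - t / Tx > 0" using t Tx_pos by simp
  define a where "a = (1 - t / Tx) powr (1 / (2 - p))"
  have b': "1 - t / Tx \<noteq> 0" using b by linarith
  have a: "a > 0" by (simp only: a_def powr_gt_zero b' not_False_eq_True)
  have "a powr (2 - p) = (1 - t / Tx) powr ((1 / (2 - p)) * (2 - p))" by (simp add: a_def powr_powr)
  also have "\<dots> = 1 - t / Tx"
  proof -
    have "(1 / (2 - p)) * (2 - p) = 1" using p2 by simp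
    then show ?thesis using b by simp
  qed
  finally have ap: "a powr (2 - p) = 1 - t / Tx" .
  have "norm (u t /\<^sub>R a) = norm (u t) / a" using a by (simp add: divide_inverse mult.commute)
  then have "norm (u t /\<^sub>R a) powr (2 - p) = norm (u t) powr (2 - p) / a powr (2 - p)"
    by (simp add: powr_divide)
  then show ?thesis unfolding a_def[symmetric] ap by (simp add: phi_def)
qed

lemma W_lower:
  assumes t: "0 \<le> t" "t < Tx"
  shows "(2 - p) * Tx * l1 \<le> phi t / (1 - t / Tx)"
proof -
  have b: "1 - t / Tx > 0" using t Tx_pos by simp
  have "(2 - p) * Tx * l1 * (1 - t / Tx) = (2 - p) * l1 * (Tx - t)"
    using Tx_pos by (simp add: field_simps)
  also have "\<dots> \<le> phi t" by (rule lower[OF t])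
  finally show ?thesis using b by (simp add: le_divide_eq)
qed

lemma W_upper:
  assumes t: "0 < t" "t < Tx"
  shows "phi t / (1 - t / Tx) \<le> (2 - p) * Tx * Lam t"
proof -
  have b: "1 - t / Tx > 0" using t Tx_pos by simp
  have "phi t \<le> (2 - p) * (Tx - t) * Lam t" by (rule upper[OF t])
  also have "\<dots> = (2 - p) * Tx * Lam t * (1 - t / Tx)"
    using Tx_pos by (simp add: field_simps)
  finally show ?thesis using b by (simp add: divide_le_eq)
qed

lemma W_bounded: "\<exists>M. \<forall>t. 0 \<le> t \<and> t < Tx \<longrightarrow> phi t / (1 - t / Tx) \<le> M"
proof -
  define B where "B = (2 - p) * Tx * Lam (Tx / 2)"
  have "phi t / (1 - t / Tx) \<le> max B (2 * phi 0)" if t: "0 \<le> t" "t < Tx" for t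
  proof (cases "t \<ge> Tx / 2")
    case True
    have "phi t / (1 - t / Tx) \<le> (2 - p) * Tx * Lam t" by (rule W_upper) (use t True Tx_pos in auto)
    also have "\<dots> \<le> B" unfolding B_def
    proof (intro mult_left_mono)
      show "Lam t \<le> Lam (Tx / 2)" by (rule Lam_mono) (use t True Tx_pos before_Tx[of t] in auto)
    qed (use p2 Tx_pos in auto)
    finally show ?thesis by simp
  next
    case False
    have b: "1 - t / Tx \<ge> 1 / 2" using False Tx_pos by (simp add: field_simps)
    have pt: "phi t \<le> phi 0" unfolding phi_def
      by (rule powr_mono2) (use p2 N_mono[of 0 t] t in auto)
    have "phi t / (1 - t / Tx) \<le> phi 0 / (1 / 2)"
      by (rule frac_le) (use pt b phi_nonneg[of 0] in auto)
    then show ?thesis by simp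
  qed
  then show ?thesis by blast
qed

end

theorem lemma2:
  fixes J :: "'a::{real_inner, complete_space} \<Rightarrow> ereal"
    and p :: real and f :: 'a and u :: "real \<Rightarrow> 'a"
  assumes "convex_fun J" and "lsc_fun J" and "proper_fun J" and "dense_domain J"
    and "abs_homogeneous p J"
    and "lambda1 p J > 0"
    and "1 \<le> p" and "p < 2"
    and "f \<in> H0 J"
    and "gradient_flow J f u"
  defines "Tex \<equiv> extinction_time u"
  defines "lam \<equiv> 1 / ((2 - p) * Tex)"
  defines "a \<equiv> (\<lambda>t. (1 - (2 - p) * lam * t) powr (1 / (2 - p)))"
  defines "w \<equiv> (\<lambda>t. u t /\<^sub>R a t)"
  shows "(\<forall>t. 0 \<le> t \<and> t < Tex \<longrightarrow>
            ereal ((2 - p) * Tex) * lambda1 p J \<le> ereal (norm (w t) powr (2 - p)) \<and>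
            ereal (norm (w t) powr (2 - p)) \<le> ereal ((2 - p) * Tex) * Rayleigh p J u t)
         \<and> bounded (w ` {0..<Tex})"
proof -
  interpret F: flow2 J p u f
    apply unfold_locales
    using assms by auto
  have Tex: "Tex = F.Tx" by (simp add: Tex_def F.Tx_def)
  have T0: "Tex > 0" using F.Tx_pos Tex by simp
  have p2: "p < 2" "1 \<le> p" using assms by auto
  have aeq: "a t = (1 - t / Tex) powr (1 / (2 - p))" for t
  proof -
    have "(2 - p) * lam * t = t / Tex" using p2 T0 by (simp add: lam_def field_simps)
    then show ?thesis by (simp add: a_def)
  qed
  have weq: "norm (w t) powr (2 - p) = F.phi t / (1 - t / Tex)" if "0 \<le> t" "t < Tex" for t
    unfolding w_def aeq Tex using F.wnorm[of t] that Tex by simp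
  have part1: "ereal ((2 - p) * Tex) * lambda1 p J \<le> ereal (norm (w t) powr (2 - p)) \<and>
            ereal (norm (w t) powr (2 - p)) \<le> ereal ((2 - p) * Tex) * Rayleigh p J u t"
    if t: "0 \<le> t" "t < Tex" for t
  proof
    have "(2 - p) * Tex * F.l1 \<le> F.phi t / (1 - t / Tex)"
      using F.W_lower[of t] t Tex by simp
    then show "ereal ((2 - p) * Tex) * lambda1 p J \<le> ereal (norm (w t) powr (2 - p))"
      using F.l1_ok weq[OF t] by simp
  next
    show "ereal (norm (w t) powr (2 - p)) \<le> ereal ((2 - p) * Tex) * Rayleigh p J u t"
    proof (cases "t = 0")
      case False
      then have t0: "t > 0" using t by simp
      have ut: "u t \<noteq> 0" using F.before_Tx[of t] t Tex by simp
      have R: "Rayleigh p J u t = ereal (F.Lam t)"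
        using F.g_fin[OF t0] ut by (simp add: Rayleigh_def F.Lam_def)
      have "F.phi t / (1 - t / Tex) \<le> (2 - p) * Tex * F.Lam t"
        using F.W_upper[of t] t0 t Tex by simp
      then show ?thesis using R weq[OF t] by simp
    next
      case True
      have w0: "norm (w t) powr (2 - p) = F.phi 0" using weq[OF t] True by simp
      have fnz: "norm f powr p > 0" using F.f_nz by simp
      show ?thesis
      proof (cases "J f")
        case (real jf)
        have R: "Rayleigh p J u t = ereal (p * jf / norm f powr p)"
          using real True F.u0 fnz by (simp add: Rayleigh_def)
        have "F.phi 0 \<le> (2 - p) * F.Tx * (p * jf / norm f powr p)" by (rule F.upper0[OF real])
        then show ?thesis using R w0 Tex by simp
      next
        case PInf
        have R: "Rayleigh p J u t = \<infinity>"
          using PInf True F.u0 fnz p2 by (simp add: Rayleigh_def)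
        have "ereal ((2 - p) * Tex) * \<infinity> = \<infinity>" using p2 T0 by simp
        then show ?thesis using R by simp
      next
        case MInf
        then show ?thesis using F.J_ninf[of f] by simp
      qed
    qed
  qed
  obtain M where M: "\<And>t. 0 \<le> t \<Longrightarrow> t < Tex \<Longrightarrow> F.phi t / (1 - t / Tex) \<le> M"
    using F.W_bounded Tex by auto
  have "norm (w t) \<le> M powr (1 / (2 - p))" if t: "t \<in> {0..<Tex}" for t
  proof -
    have b: "1 - t / Tex > 0" using t T0 by simp
    have nn: "0 \<le> F.phi t / (1 - t / Tex)" using F.phi_nonneg[of t] b by simp
    have "norm (w t) = (norm (w t) powr (2 - p)) powr (1 / (2 - p))"
      using p2 by (simp add: powr_powr)
    also have "\<dots> \<le> M powr (1 / (2 - p))"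
      by (rule powr_mono2) (use p2 weq[of t] M[of t] t nn in auto)
    finally show ?thesis .
  qed
  then have "bounded (w ` {0..<Tex})" unfolding bounded_iff by blast
  with part1 show ?thesis by blast
qed


end
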